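(* Let $d\ge2$ and let $\mathcal{G},\mathcal{H}\subseteq\binom{\mathbb{N}}{d}$ be finite families with $|\mathcal{G}|=|\mathcal{H}|$. If $\mathcal{G}$ is compressed and $\mathcal{H}$ is both left-compressed and right-compressed, then $|\mathrm{Inc}(\mathcal{G})|\le|\mathrm{Inc}(\mathcal{H})|$.
   Context: $\mathbb{N}=\{1,2,3,\dots\}$, $\mathbb{N}_{>k}=\{k+1,k+2,\dots\}$. $\binom{S}{d}$ is the set of $d$-element subsets of $S$; elements are written $\mathbf{u}=(u_1,\ldots,u_d)$ with $u_1<\cdots<u_d$. Squashed order: $\mathbf{u}<\mathbf{v}$ iff the largest element of the symmetric difference of $\mathbf{u},\mathbf{v}$ belongs to $\mathbf{v}$. A finite family in $\binom{\mathbb{N}}{e}$ (resp. $\binom{\mathbb{N}_{>k}}{e}$) is compressed (in it) if it consists of the smallest elements of $\binom{\mathbb{N}}{e}$ (resp. $\binom{\mathbb{N}_{>k}}{e}$) in the squashed order. For $\mathcal{F}\subseteq\binom{\mathbb{N}}{d}$ and $k\ge1$: $\widehat{\mathcal{F}}_{1,k}=\{\widehat{\mathbf{u}}\in\binom{\mathbb{N}_{>k}}{d-1}\mid \{k\}\cup\widehat{\mathbf{u}}\in\mathcal{F}\}$ and $\widehat{\mathcal{F}}_{d,k}=\{\widehat{\mathbf{u}}\in\binom{\mathbb{N}}{d-1}\mid \max\widehat{\mathbf u}<k,\ \widehat{\mathbf{u}}\cup\{k\}\in\mathcal{F}\}$. $\mathcal{F}$ is left-compressed if every $\widehat{\mathcal{F}}_{1,k}$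 is compressed in $\binom{\mathbb{N}_{>k}}{d-1}$, and right-compressed if every $\widehat{\mathcal{F}}_{d,k}$ is compressed in $\binom{\mathbb{N}}{d-1}$. $\mathrm{Inc}_1$ is the set of maps $\pi\colon\mathbb{N}\to\mathbb{N}$ with $\pi(j)<\pi(j+1)$ and $\pi(j)\le j+1$ for all $j$, acting by $\pi(\mathbf{u})=(\pi(u_1),\ldots,\pi(u_d))$; $\mathrm{Inc}(\mathcal{F})=\{\pi(\mathbf{u})\mid\mathbf{u}\in\mathcal{F},\pi\in\mathrm{Inc}_1\}$. *)

theory Defs
  imports Main
begin

text \<open>N_{>k} = {k+1, k+2, ...}; the positive naturals are N_{>0}.\<close>

definition subsets_gt :: "nat \<Rightarrow> nat \<Rightarrow> nat set set" where
  "subsets_gt k e = {u. finite u \<and> card u = e \<and> (\<forall>x\<in>u. k < x)}"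

abbreviation subsets_N :: "nat \<Rightarrow> nat set set" where
  "subsets_N e \<equiv> subsets_gt 0 e"

definition squashed_less :: "nat set \<Rightarrow> nat set \<Rightarrow> bool" where
  "squashed_less u v \<longleftrightarrow> u \<noteq> v \<and> Max ((u - v) \<union> (v - u)) \<in> v"

definition compressed_in :: "nat \<Rightarrow> nat \<Rightarrow> nat set set \<Rightarrow> bool" where
  "compressed_in k e F \<longleftrightarrow> finite F \<and> F \<subseteq> subsets_gt k e \<and>
     (\<forall>u\<in>F. \<forall>v\<in>subsets_gt k e. squashed_less v u \<longrightarrow> v \<in> F)"

definition hatF1 :: "nat set set \<Rightarrow> nat \<Rightarrow> nat \<Rightarrow> nat set set" where
  "hatF1 F d k = {w \<in> subsets_gt k (d - 1). insert k w \<in> F}"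

definition hatFd :: "nat set set \<Rightarrow> nat \<Rightarrow> nat \<Rightarrow> nat set set" where
  "hatFd F d k = {w \<in> subsets_N (d - 1). (\<forall>x\<in>w. x < k) \<and> insert k w \<in> F}"

definition left_compressed :: "nat \<Rightarrow> nat set set \<Rightarrow> bool" where
  "left_compressed d F \<longleftrightarrow> (\<forall>k\<ge>1. compressed_in k (d - 1) (hatF1 F d k))"

definition right_compressed :: "nat \<Rightarrow> nat set set \<Rightarrow> bool" where
  "right_compressed d F \<longleftrightarrow> (\<forall>k\<ge>1. compressed_in 0 (d - 1) (hatFd F d k))"

text \<open>Inc_1: maps N \<rightarrow> N (value at 0 is irrelevant), strictly increasing, with pi(j) \<le> j+1.\<close>
definition Inc1 :: "(nat \<Rightarrow> nat) set" where
  "Inc1 = {\<pi>. \<forall>j\<ge>1. 1 \<le> \<pi> j \<and> \<pi> j < \<pi> (j + 1) \<and> \<pi> j \<le> j + 1}"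

definition IncF :: "nat set set \<Rightarrow> nat set set" where
  "IncF F = {\<pi> ` u | u \<pi>. u \<in> F \<and> \<pi> \<in> Inc1}"

end

theory Submission
  imports Defs
begin

definition bin :: "nat set \<Rightarrow> nat" where "bin u = (\<Sum>x\<in>u. 2^x)"
definition cl :: "nat set \<Rightarrow> nat set \<Rightarrow> bool" where
  "cl u v \<longleftrightarrow> (\<exists>s. s\<in>v \<and> s\<notin>u \<and> (\<forall>t>s. t\<in>u \<longleftrightarrow> t\<in>v))"

lemma geom2: "(\<Sum>i<n. (2::nat)^i) + 1 = 2^n"
  by (induction n) auto

lemma bin_lt: assumes "A \<subseteq> {..<s}" shows "bin A < 2^s"
proof -
  have "finite A" using assms finite_subset by blast
  have "bin A \<le> (\<Sum>i<s. (2::nat)^i)" unfolding bin_def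
    by (rule sum_mono2) (use assms in auto)
  also have "\<dots> < 2^s" using geom2[of s] by linarith
  finally show ?thesis .
qed

lemma cl_bin: assumes "finite u" "finite v" "cl u v" shows "bin u < bin v"
proof -
  obtain s where s: "s\<in>v" "s\<notin>u" "\<forall>t>s. t\<in>u \<longleftrightarrow> t\<in>v" using assms(3) cl_def by blast
  define T where "T = v \<inter> {s<..}"
  have uT: "u = (u \<inter> {..<s}) \<union> T" using s by (auto simp: T_def) (metis linorder_neqE_nat)+
  have vT: "v = (v \<inter> {..<s}) \<union> ({s} \<union> T)" using s by (auto simp: T_def)
  have fT: "finite T" using assms(2) by (simp add: T_def)
  have "bin u = bin (u \<inter> {..<s}) + bin T"
    unfolding bin_def by (subst uT, rule sum.union_disjoint) (use assms fT in \<open>auto simp: T_def\<close>)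
  also have "\<dots> < 2^s + bin T" using bin_lt[of "u \<inter> {..<s}" s] by auto
  also have "2^s + bin T \<le> bin v"
  proof -
    have "bin v = bin (v \<inter> {..<s}) + bin ({s} \<union> T)"
      unfolding bin_def by (subst vT, rule sum.union_disjoint) (use assms fT in \<open>auto simp: T_def\<close>)
    also have "bin ({s} \<union> T) = 2^s + bin T"
      unfolding bin_def by (subst sum.union_disjoint) (use fT in \<open>auto simp: T_def\<close>)
    finally show ?thesis by simp
  qed
  finally show ?thesis .
qed

lemma cl_total: assumes "finite u" "finite v" "u \<noteq> v" shows "cl u v \<or> cl v u"
proof -
  define D where "D = (u - v) \<union> (v - u)"
  have fD: "finite D" "D \<noteq> {}" using assms by (auto simp: D_def)
  define s where "s = Max D"
  have sD: "s \<in> D" using fD by (simp add: s_def)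
  have ab: "\<forall>t>s. t\<in>u \<longleftrightarrow> t\<in>v"
  proof (intro allI impI)
    fix t assume "t > s"
    then have "t \<notin> D" using fD Max_ge s_def by (metis leD)
    then show "t\<in>u \<longleftrightarrow> t\<in>v" by (auto simp: D_def)
  qed
  show ?thesis using sD ab unfolding cl_def D_def by blast
qed

lemma bin_less_iff: assumes "finite u" "finite v" shows "bin u < bin v \<longleftrightarrow> cl u v"
  using cl_bin[OF assms] cl_bin[OF assms(2,1)] cl_total[OF assms] by fastforce

lemma sq_cl: assumes "finite u" "finite v" shows "squashed_less u v \<longleftrightarrow> cl u v"
proof
  assume "squashed_less u v"
  then have ne: "u \<noteq> v" and m: "Max ((u - v) \<union> (v - u)) \<in> v" by (auto simp: squashed_less_def)
  define D where "D = (u - v) \<union> (v - u)"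
  have fD: "finite D" "D \<noteq> {}" using assms ne by (auto simp: D_def)
  define s where "s = Max D"
  have sD: "s \<in> D" using fD by (simp add: s_def)
  have ab: "\<forall>t>s. t\<in>u \<longleftrightarrow> t\<in>v"
  proof (intro allI impI)
    fix t assume "t > s"
    then have "t \<notin> D" using fD Max_ge s_def by (metis leD)
    then show "t\<in>u \<longleftrightarrow> t\<in>v" by (auto simp: D_def)
  qed
  show "cl u v" using sD ab m unfolding cl_def s_def D_def by blast
next
  assume "cl u v"
  then obtain s where s: "s\<in>v" "s\<notin>u" "\<forall>t>s. t\<in>u \<longleftrightarrow> t\<in>v" using cl_def by blast
  define D where "D = (u - v) \<union> (v - u)"
  have "Max D = s"
    by (rule Max_eqI) (use assms s in \<open>auto simp: D_def intro: leI\<close>)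
  then show "squashed_less u v" using s unfolding squashed_less_def D_def by auto
qed

lemma S_finite: "u \<in> subsets_gt k e \<Longrightarrow> finite u" by (simp add: subsets_gt_def)

lemma comp_iff: "compressed_in 0 e C \<longleftrightarrow> finite C \<and> C \<subseteq> subsets_N e \<and>
   (\<forall>u\<in>C. \<forall>v\<in>subsets_N e. bin v < bin u \<longrightarrow> v \<in> C)"
  unfolding compressed_in_def using sq_cl bin_less_iff S_finite by (metis subsetD)

lemma bin_inj: assumes "finite u" "finite v" "u \<noteq> v" shows "bin u \<noteq> bin v"
proof
  assume "bin u = bin v"
  moreover have "cl u v \<or> cl v u" using cl_total[OF assms] .
  ultimately show False using cl_bin[OF assms(1,2)] cl_bin[OF assms(2,1)] by auto
qed

lemma comp_nested:
  assumes C: "compressed_in 0 e C" and C': "compressed_in 0 e C'" and le: "card C \<le> card C'"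
  shows "C \<subseteq> C'"
proof (rule ccontr)
  assume "\<not> C \<subseteq> C'"
  then obtain x where x: "x \<in> C" "x \<notin> C'" by blast
  have c: "finite C" "C \<subseteq> subsets_N e" "\<forall>u\<in>C. \<forall>v\<in>subsets_N e. bin v < bin u \<longrightarrow> v \<in> C"
    using C comp_iff by auto
  have c': "finite C'" "C' \<subseteq> subsets_N e" "\<forall>u\<in>C'. \<forall>v\<in>subsets_N e. bin v < bin u \<longrightarrow> v \<in> C'"
    using C' comp_iff by auto
  have "C' \<subseteq> C - {x}"
  proof
    fix y assume y: "y \<in> C'"
    have "y \<noteq> x" using x y by auto
    moreover have fy: "finite y" "finite x" using y x c(2) c'(2) S_finite by (meson subsetD)+
    ultimately have "bin y \<noteq> bin x" using bin_inj by blast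
    moreover have "\<not> bin x < bin y" using c'(3) y x c(2) by blast
    ultimately have "bin y < bin x" by linarith
    then have "y \<in> C" using c(3) x y c'(2) by blast
    then show "y \<in> C - {x}" using \<open>y \<noteq> x\<close> by blast
  qed
  then have "card C' \<le> card (C - {x})" using c by (meson card_mono finite_Diff)
  also have "\<dots> < card C" using x c by (meson card_Diff1_less)
  finally show False using le by linarith
qed

lemma comp_exists:
  assumes "finite F" "F \<subseteq> subsets_N e" "n \<le> card F"
  shows "\<exists>C. compressed_in 0 e C \<and> card C = n"
  using assms(3)
proof (induction n)
  case 0
  then show ?case by (rule_tac x="{}" in exI) (simp add: compressed_in_def)
next
  case (Suc n)
  then obtain C where C: "compressed_in 0 e C" "card C = n" by auto
  have c: "finite C" "C \<subseteq> subsets_N e" "\<forall>u\<in>C. \<forall>v\<in>subsets_N e. bin v < bin u \<longrightarrow> v \<in> C"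
    using C comp_iff by auto
  have "\<not> F \<subseteq> C"
  proof
    assume "F \<subseteq> C" then have "card F \<le> card C" using c(1) card_mono by blast
    then show False using Suc.prems C(2) by linarith
  qed
  then obtain y0 where "y0 \<in> subsets_N e - C" using assms(2) by blast
  then obtain y where y: "y \<in> subsets_N e - C" and ym: "\<forall>z. z \<in> subsets_N e - C \<longrightarrow> bin y \<le> bin z"
    using ex_has_least_nat[of "\<lambda>z. z \<in> subsets_N e - C" y0 bin] by blast
  have "compressed_in 0 e (insert y C)"
    unfolding comp_iff
  proof (intro conjI ballI impI)
    show "finite (insert y C)" using c by simp
    show "insert y C \<subseteq> subsets_N e" using c y by blast
  next
    fix u v assume u: "u \<in> insert y C" and v: "v \<in> subsets_N e" and b: "bin v < bin u"
    show "v \<in> insert y C"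
    proof (cases "u = y")
      case True
      then have "v \<notin> subsets_N e - C" using ym b leD by blast
      then show ?thesis using v by blast
    next
      case False
      then show ?thesis using u v b c(3) by blast
    qed
  qed
  moreover have "card (insert y C) = Suc n" using y c C(2) by simp
  ultimately show ?case by blast
qed

definition cnt :: "nat set \<Rightarrow> nat \<Rightarrow> nat" where "cnt u t = card (u \<inter> {..<t})"
definition dle :: "nat set \<Rightarrow> nat set \<Rightarrow> bool" where "dle v u \<longleftrightarrow> (\<forall>t. cnt u t \<le> cnt v t)"
definition shifted :: "nat \<Rightarrow> nat set set \<Rightarrow> bool" where
  "shifted e H \<longleftrightarrow> H \<subseteq> subsets_N e \<and> (\<forall>u\<in>H. \<forall>v\<in>subsets_N e. dle v u \<longrightarrow> v \<in> H)"

lemma S_iff: "u \<in> subsets_N e \<longleftrightarrow> finite u \<and> card u = e \<and> 0 \<notin> u"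
  unfolding subsets_gt_def by (auto) (metis neq0_conv)

lemma cnt_0[simp]: "cnt u 0 = 0" by (simp add: cnt_def)

lemma cnt_Suc: assumes "finite u" shows "cnt u (Suc t) = cnt u t + (if t \<in> u then 1 else 0)"
proof -
  have "u \<inter> {..<Suc t} = (if t \<in> u then insert t (u \<inter> {..<t}) else u \<inter> {..<t})"
    by (auto simp: less_Suc_eq)
  then show ?thesis using assms by (simp add: cnt_def)
qed

lemma cnt_le_card: "finite u \<Longrightarrow> cnt u t \<le> card u"
  unfolding cnt_def by (simp add: card_mono)

lemma cnt_mono: assumes "finite u" "t \<le> t'" shows "cnt u t \<le> cnt u t'"
  unfolding cnt_def using assms by (intro card_mono) auto

lemma card_split: assumes "finite u" shows "card u = cnt u s + card (u \<inter> {s..})"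
proof -
  have "u = (u \<inter> {..<s}) \<union> (u \<inter> {s..})" by auto
  then have "card u = card ((u \<inter> {..<s}) \<union> (u \<inter> {s..}))" by simp
  also have "\<dots> = card (u \<inter> {..<s}) + card (u \<inter> {s..})"
    by (rule card_Un_disjoint) (use assms in auto)
  finally show ?thesis by (simp add: cnt_def)
qed

lemma dle_cl:
  assumes fu: "finite u" and fv: "finite v" and cd: "card u = card v" and d: "dle v u" and ne: "v \<noteq> u"
  shows "cl v u"
proof -
  have "cl v u \<or> cl u v" using cl_total[OF fv fu ne] .
  moreover have "\<not> cl u v"
  proof
    assume "cl u v"
    then obtain s where s: "s\<in>v" "s\<notin>u" "\<forall>t>s. t\<in>u \<longleftrightarrow> t\<in>v" using cl_def by blast
    define T where "T = v \<inter> {s<..}"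
    have u1: "u \<inter> {s..} = T" using s by (auto simp: T_def) (metis le_neq_implies_less)+
    have v1: "v \<inter> {s..} = insert s T" using s by (auto simp: T_def)
    have fT: "finite T" using fv by (simp add: T_def)
    have "card u = cnt u s + card T" using card_split[OF fu, of s] u1 by simp
    moreover have "card v = cnt v s + Suc (card T)" using card_split[OF fv, of s] v1 fT by (simp add: T_def)
    ultimately have "cnt v s < cnt u s" using cd by linarith
    then show False using d unfolding dle_def by (meson leD)
  qed
  ultimately show ?thesis by blast
qed

lemma comp_shifted: assumes "compressed_in 0 e C" shows "shifted e C"
proof -
  have c: "finite C" "C \<subseteq> subsets_N e" "\<forall>u\<in>C. \<forall>v\<in>subsets_N e. bin v < bin u \<longrightarrow> v \<in> C"
    using assms comp_iff by auto
  show ?thesis unfolding shifted_def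
  proof (intro conjI ballI impI)
    show "C \<subseteq> subsets_N e" using c by simp
  next
    fix u v assume u: "u \<in> C" and v: "v \<in> subsets_N e" and d: "dle v u"
    show "v \<in> C"
    proof (cases "v = u")
      case True then show ?thesis using u by simp
    next
      case False
      have uS: "u \<in> subsets_N e" using u c by blast
      have "cl v u" using dle_cl[of u v] uS v d False S_iff by metis
      then have "bin v < bin u" using cl_bin uS v S_iff by metis
      then show ?thesis using c(3) u v by blast
    qed
  qed
qed

lemma cnt_eq_all: assumes "finite u" "finite v" "\<forall>t. cnt u t = cnt v t" shows "u = v"
proof -
  have "t \<in> u \<longleftrightarrow> t \<in> v" for t
    using assms(3)[rule_format, of "Suc t"] assms(3)[rule_format, of t] cnt_Suc[OF assms(1), of t] cnt_Suc[OF assms(2), of t]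
    by (auto split: if_splits)
  then show ?thesis by blast
qed

lemma cnt_move:
  assumes fu: "finite u" and x: "x \<in> u" "1 \<le> x" and xm: "x - 1 \<notin> u"
  shows "cnt (insert (x-1) (u - {x})) t = cnt u t + (if t = x then 1 else 0)"
proof -
  consider "t < x" | "t = x" | "t > x" by linarith
  then show ?thesis
  proof cases
    case 1
    then have "insert (x-1) (u - {x}) \<inter> {..<t} = u \<inter> {..<t}" using x by auto
    then show ?thesis using 1 by (simp add: cnt_def)
  next
    case 2
    then have "insert (x-1) (u - {x}) \<inter> {..<t} = insert (x-1) (u \<inter> {..<t})" using x by auto
    then show ?thesis using 2 xm fu by (simp add: cnt_def)
  next
    case 3
    then have e: "insert (x-1) (u - {x}) \<inter> {..<t} = insert (x-1) ((u \<inter> {..<t}) - {x})" using x by auto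
    have "x \<in> u \<inter> {..<t}" using 3 x by auto
    then have "card (insert (x-1) ((u \<inter> {..<t}) - {x})) = card (u \<inter> {..<t})"
    proof -
      have f: "finite (u \<inter> {..<t})" using fu by simp
      have n: "x - 1 \<notin> (u \<inter> {..<t}) - {x}" using xm by simp
      have "card (insert (x-1) ((u \<inter> {..<t}) - {x})) = Suc (card ((u \<inter> {..<t}) - {x}))"
        using f n by simp
      also have "card ((u \<inter> {..<t}) - {x}) = card (u \<inter> {..<t}) - 1"
        using \<open>x \<in> u \<inter> {..<t}\<close> by simp
      also have "card (u \<inter> {..<t}) > 0" using f \<open>x \<in> u \<inter> {..<t}\<close> card_gt_0_iff by blast
      then have "Suc (card (u \<inter> {..<t}) - 1) = card (u \<inter> {..<t})" by simp
      finally show ?thesis .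
    qed
    then show ?thesis using 3 e by (simp add: cnt_def)
  qed
qed

lemma step_exists:
  assumes u: "u \<in> subsets_N d" and v: "v \<in> subsets_N d" and d: "dle v u" and ne: "v \<noteq> u"
  shows "\<exists>x\<in>u. x - 1 \<notin> u \<and> 2 \<le> x \<and> dle v (insert (x-1) (u - {x}))"
proof -
  have fu: "finite u" "card u = d" "0 \<notin> u" and fv: "finite v" "card v = d" "0 \<notin> v"
    using u v S_iff by auto
  have "\<exists>t. cnt u t < cnt v t"
  proof (rule ccontr)
    assume "\<not> ?thesis"
    then have "\<forall>t. cnt u t = cnt v t" using d unfolding dle_def by (meson le_neq_implies_less)
    then show False using cnt_eq_all fu fv ne by metis
  qed
  then obtain t0 where t0: "cnt u t0 < cnt v t0" and t0m: "\<forall>t<t0. \<not> cnt u t < cnt v t"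
    using exists_least_iff[of "\<lambda>t. cnt u t < cnt v t"] by blast
  have "t0 \<noteq> 0" using t0 by (metis cnt_0 less_irrefl)
  then obtain p where p: "t0 = Suc p" using not0_implies_Suc by blast
  have eqp: "cnt u p = cnt v p" using t0m p d unfolding dle_def by (metis le_neq_implies_less lessI)
  have pu: "p \<notin> u" and pv: "p \<in> v"
    using t0 eqp cnt_Suc[OF fu(1), of p] cnt_Suc[OF fv(1), of p] p by (auto split: if_splits)
  have cu: "cnt u (Suc p) = cnt u p" using cnt_Suc[OF fu(1), of p] pu by simp
  have cv: "cnt v (Suc p) = cnt v p + 1" using cnt_Suc[OF fv(1), of p] pv by simp
  define X where "X = {y\<in>u. Suc p \<le> y}"
  have fX: "finite X" using fu by (simp add: X_def)
  have "X \<noteq> {}"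
  proof
    assume "X = {}"
    then have "u \<inter> {..<Suc p} = u" by (auto simp: X_def)
    then have "cnt u (Suc p) = d" using fu by (simp add: cnt_def)
    moreover have "cnt v (Suc p) \<le> d" using cnt_le_card[OF fv(1)] fv by metis
    ultimately show False using t0 p by simp
  qed
  define x where "x = Min X"
  have xX: "x \<in> X" using fX \<open>X \<noteq> {}\<close> by (simp add: x_def)
  have xu: "x \<in> u" and xp: "Suc p \<le> x" using xX by (auto simp: X_def)
  have xmin: "\<And>y. y \<in> u \<Longrightarrow> Suc p \<le> y \<Longrightarrow> x \<le> y" using fX by (auto simp: x_def X_def)
  have xm1: "x - 1 \<notin> u"
  proof
    assume h: "x - 1 \<in> u"
    show False
    proof (cases "Suc p \<le> x - 1")
      case True then show False using xmin[OF h] xp by linarith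
    next
      case False then have "x - 1 = p" using xp by linarith
      then show False using h pu by simp
    qed
  qed
  have x2: "2 \<le> x"
  proof (rule ccontr)
    assume "\<not> 2 \<le> x" then have "x = 1" using xp by linarith
    then have "p = 0" using xp by linarith
    then show False using pv fv by simp
  qed
  have cux: "cnt u x = cnt u (Suc p)"
  proof -
    have "u \<inter> {..<x} = u \<inter> {..<Suc p}"
    proof (rule set_eqI)
      fix y
      show "y \<in> u \<inter> {..<x} \<longleftrightarrow> y \<in> u \<inter> {..<Suc p}"
      proof
        assume h: "y \<in> u \<inter> {..<x}"
        have "\<not> Suc p \<le> y" using xmin[of y] h by auto
        then show "y \<in> u \<inter> {..<Suc p}" using h by simp
      next
        assume "y \<in> u \<inter> {..<Suc p}" then show "y \<in> u \<inter> {..<x}" using xp by auto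
      qed
    qed
    then show ?thesis by (simp add: cnt_def)
  qed
  have cvx: "cnt v (Suc p) \<le> cnt v x" using cnt_mono[OF fv(1) xp] .
  have "dle v (insert (x-1) (u - {x}))"
    unfolding dle_def
  proof
    fix t
    have cm: "cnt (insert (x-1) (u - {x})) t = cnt u t + (if t = x then 1 else 0)"
      using cnt_move[OF fu(1) xu _ xm1, of t] x2 by linarith
    show "cnt (insert (x-1) (u - {x})) t \<le> cnt v t"
    proof (cases "t = x")
      case True
      then show ?thesis using cm cux cvx cu cv eqp by simp
    next
      case False
      then show ?thesis using cm d[unfolded dle_def] by simp
    qed
  qed
  then show ?thesis using xu xm1 x2 by blast
qed

lemma card_move: assumes "finite w" "x \<in> w" "y \<notin> w" shows "card (insert y (w - {x})) = card w"
proof -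
  have "card (insert y (w - {x})) = Suc (card (w - {x}))" using assms by simp
  also have "card (w - {x}) = card w - 1" using assms by simp
  also have "card w > 0" using assms card_gt_0_iff by blast
  then have "Suc (card w - 1) = card w" by simp
  finally show ?thesis .
qed

lemma step_in:
  assumes d2: "2 \<le> d" and HS: "H \<subseteq> subsets_N d"
    and L: "left_compressed d H" and R: "right_compressed d H"
    and u: "u \<in> H" and xu: "x \<in> u" and xm: "x - 1 \<notin> u" and x2: "2 \<le> x"
  shows "insert (x-1) (u - {x}) \<in> H"
proof -
  have uS: "u \<in> subsets_N d" using u HS by blast
  have fu: "finite u" "card u = d" "0 \<notin> u" using uS S_iff by auto
  have une: "u \<noteq> {}" using xu by auto
  define u' where "u' = insert (x-1) (u - {x})"
  show ?thesis
  proof (cases "x = Min u")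
    case False
    define k where "k = Min u"
    have ku: "k \<in> u" using fu une by (simp add: k_def)
    have kle: "\<And>y. y \<in> u \<Longrightarrow> k \<le> y" using fu by (simp add: k_def)
    have k1: "1 \<le> k" using ku fu(3) by (cases k) auto
    have kx: "k < x" using kle[OF xu] False k_def by linarith
    have kx1: "k < x - 1"
    proof -
      have "k \<noteq> x - 1" using ku xm by auto
      then show ?thesis using kx by linarith
    qed
    define w where "w = u - {k}"
    define w' where "w' = u' - {k}"
    have wS: "w \<in> subsets_gt k (d - 1)"
      unfolding subsets_gt_def w_def using fu ku kle by (auto simp: le_neq_implies_less)
    have ins: "insert k w = u" using ku by (auto simp: w_def)
    have wF: "w \<in> hatF1 H d k" unfolding hatF1_def using wS ins u by simp
    have comp: "compressed_in k (d - 1) (hatF1 H d k)" using L k1 unfolding left_compressed_def by blast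
    have w'eq: "w' = insert (x-1) (w - {x})" using kx1 kx by (auto simp: w'_def u'_def w_def)
    have xw: "x \<in> w" using xu kx by (auto simp: w_def)
    have xmw: "x - 1 \<notin> w" using xm by (auto simp: w_def)
    have fw: "finite w" "card w = d - 1" using wS by (auto simp: subsets_gt_def)
    have w'S: "w' \<in> subsets_gt k (d - 1)"
    proof -
      have "card w' = d - 1" using w'eq fw xw xmw card_move by metis
      moreover have "\<forall>y\<in>w'. k < y" using w'eq wS kx1 by (auto simp: subsets_gt_def)
      ultimately show ?thesis using w'eq fw by (auto simp: subsets_gt_def)
    qed
    have "cl w' w" unfolding cl_def using w'eq xw x2
      by (rule_tac x=x in exI) auto
    then have "squashed_less w' w" using sq_cl w'S fw by (simp add: subsets_gt_def)
    then have "w' \<in> hatF1 H d k" using comp wF w'S unfolding compressed_in_def by blast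
    then have "insert k w' \<in> H" by (simp add: hatF1_def)
    moreover have "insert k w' = u'" using ku kx kx1 by (auto simp: w'_def u'_def)
    ultimately show ?thesis by (simp add: u'_def)
  next
    case True
    define n where "n = Max u"
    have nu: "n \<in> u" using fu une by (simp add: n_def)
    have nge: "\<And>y. y \<in> u \<Longrightarrow> y \<le> n" using fu by (simp add: n_def)
    have xn: "x < n"
    proof -
      have "x \<le> n" using nge xu by simp
      moreover have "x \<noteq> n"
      proof
        assume "x = n"
        have "\<forall>y\<in>u. y = x"
        proof
          fix y assume "y \<in> u"
          then have "Min u \<le> y" "y \<le> n" using fu nge by auto
          then show "y = x" using True \<open>x = n\<close> by linarith
        qed
        then have "u \<subseteq> {x}" by blast
        then have "card u \<le> card {x}" by (intro card_mono) simp_all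
        then have "card u \<le> 1" by simp
        then show False using fu d2 by linarith
      qed
      ultimately show ?thesis by simp
    qed
    have n1: "1 \<le> n" using xn by simp
    define w where "w = u - {n}"
    define w' where "w' = u' - {n}"
    have fw: "finite w" "card w = d - 1" using fu nu by (auto simp: w_def)
    have wS: "w \<in> subsets_N (d - 1)" using fw fu by (auto simp: w_def S_iff)
    have wlt: "\<forall>y\<in>w. y < n" using nge by (auto simp: w_def le_neq_implies_less)
    have ins: "insert n w = u" using nu by (auto simp: w_def)
    have wF: "w \<in> hatFd H d n" unfolding hatFd_def using wS wlt ins u by simp
    have comp: "compressed_in 0 (d - 1) (hatFd H d n)" using R n1 unfolding right_compressed_def by blast
    have w'eq: "w' = insert (x-1) (w - {x})" using xn by (auto simp: w'_def u'_def w_def)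
    have xw: "x \<in> w" using xu xn by (auto simp: w_def)
    have xmw: "x - 1 \<notin> w" using xm by (auto simp: w_def)
    have w'S: "w' \<in> subsets_N (d - 1)"
    proof -
      have "card w' = d - 1" using w'eq fw xw xmw card_move by metis
      moreover have "0 \<notin> w'" using w'eq wS x2 by (auto simp: S_iff)
      ultimately show ?thesis using w'eq fw by (auto simp: S_iff)
    qed
    have w'lt: "\<forall>y\<in>w'. y < n" using w'eq wlt xn by auto
    have "cl w' w" unfolding cl_def using w'eq xw x2
      by (rule_tac x=x in exI) auto
    then have "squashed_less w' w" using sq_cl w'S fw by (simp add: S_iff)
    then have "w' \<in> hatFd H d n" using comp wF w'S unfolding compressed_in_def by blast
    then have "insert n w' \<in> H" by (simp add: hatFd_def)
    moreover have "insert n w' = u'" using nu xn by (auto simp: w'_def u'_def)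
    ultimately show ?thesis by (simp add: u'_def)
  qed
qed

lemma LR_shifted:
  assumes d2: "2 \<le> d" and HS: "H \<subseteq> subsets_N d"
    and L: "left_compressed d H" and R: "right_compressed d H"
  shows "shifted d H"
  unfolding shifted_def
proof (intro conjI ballI impI)
  show "H \<subseteq> subsets_N d" by fact
next
  fix u v assume u: "u \<in> H" and v: "v \<in> subsets_N d" and dv: "dle v u"
  show "v \<in> H" using u dv
  proof (induction "\<Sum>u" arbitrary: u rule: less_induct)
    case less
    show ?case
    proof (cases "v = u")
      case True then show ?thesis using less by simp
    next
      case False
      have uS: "u \<in> subsets_N d" using less HS by blast
      obtain x where x: "x \<in> u" "x - 1 \<notin> u" "2 \<le> x" and dl: "dle v (insert (x-1) (u - {x}))"
        using step_exists[OF uS v less(3) False] by blast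
      have inH: "insert (x-1) (u - {x}) \<in> H" using step_in[OF d2 HS L R less(2) x] .
      have fu: "finite u" using uS S_iff by auto
      have e1: "\<Sum>(insert (x-1) (u - {x})) = (x - 1) + \<Sum>(u - {x})" using fu x by simp
      have e2: "\<Sum>(u - {x}) + x = \<Sum>u" using sum.remove[OF fu x(1), of "\<lambda>y. y"] by simp
      from e1 e2 have "\<Sum>(insert (x-1) (u - {x})) < \<Sum>u" using x(3) by linarith
      then show ?thesis using less(1) inH dl by blast
    qed
  qed
qed

definition up :: "nat set \<Rightarrow> nat set" where "up a = insert 1 (Suc ` a)"
definition sec :: "nat set set \<Rightarrow> nat set set" where "sec H = {a. 0 \<notin> a \<and> up a \<in> H}"
definition secB :: "nat set set \<Rightarrow> nat set set" where "secB H = {b. 0 \<notin> b \<and> Suc ` b \<in> H}"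
definition shd :: "nat set set \<Rightarrow> nat set set" where "shd F = {w - {x} | w x. w \<in> F \<and> x \<in> w}"

lemma one_notin_Suc: "0 \<notin> a \<Longrightarrow> 1 \<notin> Suc ` a" by auto

lemma inj_up: assumes "0 \<notin> a" "0 \<notin> b" "up a = up b" shows "a = b"
proof -
  have "up a - {1} = Suc ` a" "up b - {1} = Suc ` b" using assms(1,2) by (auto simp: up_def)
  then have "Suc ` a = Suc ` b" using assms(3) by simp
  then show ?thesis by (simp add: inj_image_eq_iff)
qed

lemma inj_on_up: "inj_on up {a. 0 \<notin> a}" using inj_up by (auto simp: inj_on_def)

lemma up_S: assumes "0 \<notin> a" shows "up a \<in> subsets_N e \<longleftrightarrow> finite a \<and> Suc (card a) = e"
proof -
  have "finite (up a) \<longleftrightarrow> finite a" by (simp add: up_def finite_image_iff)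
  moreover have "finite a \<Longrightarrow> card (up a) = Suc (card a)"
  proof -
    assume fa: "finite a"
    have "1 \<notin> Suc ` a" using assms by (rule one_notin_Suc)
    then have "card (up a) = Suc (card (Suc ` a))" unfolding up_def using fa by (intro card_insert_disjoint) auto
    then show ?thesis by (simp add: card_image)
  qed
  moreover have "0 \<notin> up a" by (auto simp: up_def)
  ultimately show ?thesis by (auto simp: S_iff)
qed

lemma Suc_S: "Suc ` b \<in> subsets_N e \<longleftrightarrow> finite b \<and> card b = e"
proof -
  have "finite (Suc ` b) \<longleftrightarrow> finite b" by (simp add: finite_image_iff)
  moreover have "card (Suc ` b) = card b" by (simp add: card_image)
  moreover have "0 \<notin> Suc ` b" by auto
  ultimately show ?thesis by (auto simp: S_iff)
qed

lemma sec_sub: assumes "H \<subseteq> subsets_N e" shows "sec H \<subseteq> subsets_N (e - 1)"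
proof
  fix a assume "a \<in> sec H"
  then have "0 \<notin> a" "up a \<in> subsets_N e" using assms by (auto simp: sec_def)
  then show "a \<in> subsets_N (e - 1)" using up_S by (auto simp: S_iff)
qed

lemma secB_sub: assumes "H \<subseteq> subsets_N e" shows "secB H \<subseteq> subsets_N e"
proof
  fix a assume "a \<in> secB H"
  then have "0 \<notin> a" "Suc ` a \<in> subsets_N e" using assms by (auto simp: secB_def)
  then show "a \<in> subsets_N e" using Suc_S by (auto simp: S_iff)
qed

lemma up_sec: "up ` sec H = {w \<in> H. 1 \<in> w}" if "H \<subseteq> subsets_N e"
proof
  show "up ` sec H \<subseteq> {w \<in> H. 1 \<in> w}" by (auto simp: sec_def up_def)
next
  show "{w \<in> H. 1 \<in> w} \<subseteq> up ` sec H"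
  proof
    fix w assume w: "w \<in> {w \<in> H. 1 \<in> w}"
    then have "w \<in> subsets_N e" using that by blast
    then have w0: "0 \<notin> w" by (simp add: S_iff)
    define a where "a = (\<lambda>x. x - 1) ` (w - {1})"
    have a0: "0 \<notin> a"
    proof
      assume "0 \<in> a"
      then obtain x where x1: "x \<in> w - {1}" and x2: "0 = x - 1" unfolding a_def by (rule imageE)
      have "x \<in> w" "x \<noteq> 1" using x1 by auto
      then have "x = 0" using x2 by arith
      then show False using w0 \<open>x \<in> w\<close> by simp
    qed
    have ss: "Suc (x - 1) = x" if "x \<in> w - {1}" for x
    proof -
      have "x \<noteq> 0"
      proof
        assume "x = 0" then show False using that w0 by simp
      qed
      then show ?thesis by simp
    qed
    have "Suc ` a = (\<lambda>x. Suc (x - 1)) ` (w - {1})" unfolding a_def image_image by simp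
    also have "\<dots> = (\<lambda>x. x) ` (w - {1})" by (rule image_cong[OF refl ss])
    finally have "Suc ` a = w - {1}" by simp
    then have uaw: "up a = w" using w by (auto simp: up_def)
    then have "a \<in> sec H" using a0 w by (simp add: sec_def)
    then show "w \<in> up ` sec H" using uaw by (metis imageI)
  qed
qed

lemma Suc_secB: "(image Suc) ` secB H = {w \<in> H. 1 \<notin> w}" if "H \<subseteq> subsets_N e"
proof
  show "(image Suc) ` secB H \<subseteq> {w \<in> H. 1 \<notin> w}" by (auto simp: secB_def)
next
  show "{w \<in> H. 1 \<notin> w} \<subseteq> (image Suc) ` secB H"
  proof
    fix w assume w: "w \<in> {w \<in> H. 1 \<notin> w}"
    then have "w \<in> subsets_N e" using that by blast
    then have w0: "0 \<notin> w" by (simp add: S_iff)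
    define b where "b = (\<lambda>x. x - 1) ` w"
    have b0: "0 \<notin> b"
    proof
      assume "0 \<in> b"
      then obtain x where x1: "x \<in> w" and x2: "0 = x - 1" unfolding b_def by (rule imageE)
      then have "x = 0 \<or> x = 1" by arith
      moreover have "1 \<notin> w" using w by simp
      ultimately show False using w0 x1 by auto
    qed
    have ss: "Suc (x - 1) = x" if "x \<in> w" for x
    proof -
      have "x \<noteq> 0"
      proof
        assume "x = 0" then show False using that w0 by simp
      qed
      then show ?thesis by simp
    qed
    have "Suc ` b = (\<lambda>x. Suc (x - 1)) ` w" unfolding b_def image_image by simp
    also have "\<dots> = (\<lambda>x. x) ` w" by (rule image_cong[OF refl ss])
    finally have "Suc ` b = w" by simp
    then have "b \<in> secB H" using b0 w by (simp add: secB_def)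
    then show "w \<in> (image Suc) ` secB H" using \<open>Suc ` b = w\<close> by (metis imageI)
  qed
qed

lemma finite_sec: "finite H \<Longrightarrow> finite (sec H)"
proof -
  assume f: "finite H"
  have "up ` sec H \<subseteq> H" by (auto simp: sec_def)
  then have "finite (up ` sec H)" using f finite_subset by blast
  moreover have "inj_on up (sec H)" using inj_on_up by (rule inj_on_subset) (auto simp: sec_def)
  ultimately show ?thesis using finite_imageD by blast
qed

lemma finite_secB: "finite H \<Longrightarrow> finite (secB H)"
proof -
  assume f: "finite H"
  have "(image Suc) ` secB H \<subseteq> H" by (auto simp: secB_def)
  then have "finite ((image Suc) ` secB H)" using f finite_subset by blast
  moreover have "inj_on (image Suc) (secB H)" by (auto simp: inj_on_def inj_image_eq_iff)
  ultimately show ?thesis using finite_imageD by blast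
qed

lemma card_partition:
  assumes "H \<subseteq> subsets_N e" "finite H"
  shows "card H = card (sec H) + card (secB H)"
proof -
  have "H = up ` sec H \<union> (image Suc) ` secB H" using up_sec[OF assms(1)] Suc_secB[OF assms(1)] by blast
  moreover have "up ` sec H \<inter> (image Suc) ` secB H = {}" using up_sec[OF assms(1)] Suc_secB[OF assms(1)] by blast
  moreover have "card (up ` sec H) = card (sec H)"
    using inj_on_up by (intro card_image, rule inj_on_subset) (auto simp: sec_def)
  moreover have "card ((image Suc) ` secB H) = card (secB H)"
    by (intro card_image) (auto simp: inj_on_def inj_image_eq_iff)
  moreover have "finite (up ` sec H)" "finite ((image Suc) ` secB H)"
    using finite_sec finite_secB assms(2) by auto
  ultimately show ?thesis by (metis card_Un_disjoint)
qed

lemma cnt_Suc_img: "cnt (Suc ` b) (Suc t) = cnt b t"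
proof -
  have "Suc ` b \<inter> {..<Suc t} = Suc ` (b \<inter> {..<t})" by auto
  then show ?thesis by (simp add: cnt_def card_image)
qed

lemma cnt_up: assumes "0 \<notin> a" shows "cnt (up a) (Suc t) = (if t = 0 then 0 else Suc (cnt a t))"
proof (cases "t = 0")
  case True
  have "up a \<inter> {..<Suc 0} = {}" by (auto simp: up_def)
  then show ?thesis using True by (simp add: cnt_def)
next
  case False
  have e: "up a \<inter> {..<Suc t} = insert 1 (Suc ` (a \<inter> {..<t}))" using False by (auto simp: up_def)
  have "1 \<notin> Suc ` (a \<inter> {..<t})" using assms by auto
  then have "card (insert 1 (Suc ` (a \<inter> {..<t}))) = Suc (card (Suc ` (a \<inter> {..<t})))"
    by (intro card_insert_disjoint) auto
  then show ?thesis using False e by (simp add: cnt_def card_image)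
qed

lemma dle_Suc: "dle v b \<Longrightarrow> dle (Suc ` v) (Suc ` b)"
  unfolding dle_def
proof
  fix t assume h: "\<forall>t. cnt b t \<le> cnt v t"
  show "cnt (Suc ` b) t \<le> cnt (Suc ` v) t"
    by (cases t) (use h cnt_Suc_img in auto)
qed

lemma dle_up: assumes "0 \<notin> v" "0 \<notin> a" "dle v a" shows "dle (up v) (up a)"
  unfolding dle_def
proof
  fix t
  show "cnt (up a) t \<le> cnt (up v) t"
    by (cases t) (use assms cnt_up[OF assms(1)] cnt_up[OF assms(2)] in \<open>auto simp: dle_def\<close>)
qed

lemma sec_shifted: assumes "shifted e H" "1 \<le> e" shows "shifted (e - 1) (sec H)"
  unfolding shifted_def
proof (intro conjI ballI impI)
  show "sec H \<subseteq> subsets_N (e - 1)" using assms sec_sub unfolding shifted_def by blast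
next
  fix a v assume a: "a \<in> sec H" and v: "v \<in> subsets_N (e - 1)" and d: "dle v a"
  have a0: "0 \<notin> a" "up a \<in> H" using a by (auto simp: sec_def)
  have v0: "0 \<notin> v" "finite v" "card v = e - 1" using v S_iff by auto
  have "up v \<in> subsets_N e" using up_S[OF v0(1)] v0 assms(2) by simp
  moreover have "dle (up v) (up a)" using dle_up v0 a0 d by blast
  ultimately have "up v \<in> H" using assms(1) a0 unfolding shifted_def by blast
  then show "v \<in> sec H" using v0 by (simp add: sec_def)
qed

lemma secB_shifted: assumes "shifted e H" shows "shifted e (secB H)"
  unfolding shifted_def
proof (intro conjI ballI impI)
  show "secB H \<subseteq> subsets_N e" using assms secB_sub unfolding shifted_def by blast
next
  fix a v assume a: "a \<in> secB H" and v: "v \<in> subsets_N e" and d: "dle v a"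
  have a0: "0 \<notin> a" "Suc ` a \<in> H" using a by (auto simp: secB_def)
  have v0: "0 \<notin> v" "finite v" "card v = e" using v S_iff by auto
  have "Suc ` v \<in> subsets_N e" using Suc_S v0 by simp
  moreover have "dle (Suc ` v) (Suc ` a)" using dle_Suc d by blast
  ultimately have "Suc ` v \<in> H" using assms(1) a0 unfolding shifted_def by blast
  then show "v \<in> secB H" using v0 by (simp add: secB_def)
qed

lemma bin_Suc: "bin (Suc ` b) = 2 * bin b"
  unfolding bin_def by (simp add: sum.reindex sum_distrib_left)

lemma bin_up: assumes "0 \<notin> a" "finite a" shows "bin (up a) = 2 + 2 * bin a"
proof -
  have "1 \<notin> Suc ` a" using assms by auto
  then have "bin (up a) = 2^1 + bin (Suc ` a)" unfolding up_def bin_def using assms by simp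
  then show ?thesis using bin_Suc by simp
qed

lemma sec_comp: assumes "compressed_in 0 e C" "1 \<le> e" shows "compressed_in 0 (e - 1) (sec C)"
proof -
  have c: "finite C" "C \<subseteq> subsets_N e" "\<forall>u\<in>C. \<forall>v\<in>subsets_N e. bin v < bin u \<longrightarrow> v \<in> C"
    using assms comp_iff by auto
  show ?thesis unfolding comp_iff
  proof (intro conjI ballI impI)
    show "finite (sec C)" using finite_sec c by blast
    show "sec C \<subseteq> subsets_N (e - 1)" using sec_sub c by blast
  next
    fix a v assume a: "a \<in> sec C" and v: "v \<in> subsets_N (e - 1)" and b: "bin v < bin a"
    have a0: "0 \<notin> a" "up a \<in> C" using a by (auto simp: sec_def)
    have fa: "finite a" using a sec_sub c(2) S_iff by blast
    have v0: "0 \<notin> v" "finite v" "card v = e - 1" using v S_iff by auto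
    have uv: "up v \<in> subsets_N e" using up_S[OF v0(1)] v0 assms(2) by simp
    have "bin (up v) < bin (up a)" using bin_up a0 fa v0 b by simp
    then have "up v \<in> C" using c(3) a0 uv by blast
    then show "v \<in> sec C" using v0 by (simp add: sec_def)
  qed
qed

lemma secB_comp: assumes "compressed_in 0 e C" shows "compressed_in 0 e (secB C)"
proof -
  have c: "finite C" "C \<subseteq> subsets_N e" "\<forall>u\<in>C. \<forall>v\<in>subsets_N e. bin v < bin u \<longrightarrow> v \<in> C"
    using assms comp_iff by auto
  show ?thesis unfolding comp_iff
  proof (intro conjI ballI impI)
    show "finite (secB C)" using finite_secB c by blast
    show "secB C \<subseteq> subsets_N e" using secB_sub c by blast
  next
    fix a v assume a: "a \<in> secB C" and v: "v \<in> subsets_N e" and b: "bin v < bin a"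
    have a0: "0 \<notin> a" "Suc ` a \<in> C" using a by (auto simp: secB_def)
    have v0: "0 \<notin> v" "finite v" "card v = e" using v S_iff by auto
    have uv: "Suc ` v \<in> subsets_N e" using Suc_S v0 by simp
    have "bin (Suc ` v) < bin (Suc ` a)" using bin_Suc b by simp
    then have "Suc ` v \<in> C" using c(3) a0 uv by blast
    then show "v \<in> secB C" using v0 by (simp add: secB_def)
  qed
qed

lemma Inc1_D: assumes "\<pi> \<in> Inc1" "1 \<le> j"
  shows "1 \<le> \<pi> j" "\<pi> j < \<pi> (Suc j)" "\<pi> j \<le> Suc j"
  using assms unfolding Inc1_def by auto

lemma Inc1_ge: assumes "\<pi> \<in> Inc1" "1 \<le> j" shows "j \<le> \<pi> j"
  using assms(2)
proof (induction j rule: dec_induct)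
  case base then show ?case using Inc1_D[OF assms(1), of 1] by simp
next
  case (step n)
  then show ?case using Inc1_D[OF assms(1), of n] by simp
qed

lemma Inc1_mono: assumes "\<pi> \<in> Inc1" "1 \<le> i" "i < j" shows "\<pi> i < \<pi> j"
proof -
  have "\<pi> i < \<pi> (i + Suc k)" for k
  proof (induction k)
    case 0 then show ?case using Inc1_D[OF assms(1,2)] by simp
  next
    case (Suc k)
    then show ?case using Inc1_D[OF assms(1), of "i + Suc k"] assms(2) by simp
  qed
  moreover have "j = i + Suc (j - i - 1)" using assms(3) by simp
  ultimately show ?thesis by metis
qed

lemma Suc_Inc1: "Suc \<in> Inc1" unfolding Inc1_def by auto

lemma Inc1_lift: assumes "\<pi> \<in> Inc1" shows "(\<lambda>j. if j \<le> 1 then j else Suc (\<pi> (j - 1))) \<in> Inc1"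
  unfolding Inc1_def
proof (intro CollectI allI impI conjI)
  fix j :: nat assume j: "j \<ge> 1"
  show "1 \<le> (if j \<le> 1 then j else Suc (\<pi> (j - 1)))" using j by simp
  show "(if j \<le> 1 then j else Suc (\<pi> (j - 1))) < (if j + 1 \<le> 1 then j + 1 else Suc (\<pi> (j + 1 - 1)))"
  proof (cases "j = 1")
    case True then show ?thesis using Inc1_D[OF assms, of 1] by simp
  next
    case False then have "j \<ge> 2" using j by simp
    then show ?thesis using Inc1_D[OF assms, of "j - 1"] by simp
  qed
  show "(if j \<le> 1 then j else Suc (\<pi> (j - 1))) \<le> j + 1"
  proof (cases "j = 1")
    case True then show ?thesis by simp
  next
    case False then have "j \<ge> 2" using j by simp
    then show ?thesis using Inc1_D[OF assms, of "j - 1"] by simp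
  qed
qed

lemma Inc1_drop: assumes "\<pi> \<in> Inc1" "\<pi> 1 = 1" shows "(\<lambda>j. \<pi> (Suc j) - 1) \<in> Inc1"
  unfolding Inc1_def
proof (intro CollectI allI impI conjI)
  fix j :: nat assume j: "j \<ge> 1"
  have a: "\<pi> 1 < \<pi> (Suc j)" using Inc1_mono[OF assms(1), of 1 "Suc j"] j by simp
  show "1 \<le> \<pi> (Suc j) - 1" using a assms(2) by simp
  show "\<pi> (Suc j) - 1 < \<pi> (Suc (j + 1)) - 1" using Inc1_D[OF assms(1), of "Suc j"] a by simp
  show "\<pi> (Suc j) - 1 \<le> j + 1" using Inc1_D[OF assms(1), of "Suc j"] by simp
qed

lemma dle_img: assumes "finite u" "inj_on f u" "\<forall>j\<in>u. f j \<le> j" shows "dle (f ` u) u"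
  unfolding dle_def cnt_def
proof
  fix t
  have "f ` (u \<inter> {..<t}) \<subseteq> f ` u \<inter> {..<t}" using assms(3) by fastforce
  then have "card (f ` (u \<inter> {..<t})) \<le> card (f ` u \<inter> {..<t})" using assms(1) by (intro card_mono) auto
  moreover have "card (f ` (u \<inter> {..<t})) = card (u \<inter> {..<t})"
    using assms(2) by (intro card_image) (rule inj_on_subset, auto)
  ultimately show "card (u \<inter> {..<t}) \<le> card (f ` u \<inter> {..<t})" by simp
qed

lemma IncF_mono: "F \<subseteq> F' \<Longrightarrow> IncF F \<subseteq> IncF F'"
  unfolding IncF_def by blast

lemma finite_IncF: assumes "finite F" "\<forall>u\<in>F. finite u \<and> 0 \<notin> u" shows "finite (IncF F)"
proof -
  define M where "M = Max (\<Union>F)"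
  have fU: "finite (\<Union>F)" using assms by auto
  have "IncF F \<subseteq> Pow {..Suc M}"
  proof
    fix v assume "v \<in> IncF F"
    then obtain u \<pi> where u: "u \<in> F" "\<pi> \<in> Inc1" "v = \<pi> ` u" unfolding IncF_def by blast
    have "\<pi> x \<le> Suc M" if "x \<in> u" for x
    proof -
      have "x \<in> \<Union>F" using that u by blast
      then have "x \<le> M" unfolding M_def using fU by (rule Max_ge[rotated])
      moreover have "x \<ge> 1" using that u assms(2) by (cases x) auto
      ultimately show ?thesis using Inc1_D[OF u(2), of x] by simp
    qed
    then show "v \<in> Pow {..Suc M}" using u by auto
  qed
  then show ?thesis by (rule finite_subset) simp
qed

lemma IncF_rec: assumes sh: "shifted e H" and e1: "1 \<le> e"
  shows "IncF H = (image Suc) ` H \<union> up ` IncF (sec H)"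
proof
  have HS: "H \<subseteq> subsets_N e" using sh unfolding shifted_def by blast
  show "IncF H \<subseteq> (image Suc) ` H \<union> up ` IncF (sec H)"
  proof
    fix v assume "v \<in> IncF H"
    then obtain u \<pi> where u: "u \<in> H" and pi: "\<pi> \<in> Inc1" and v: "v = \<pi> ` u" unfolding IncF_def by blast
    have uS: "finite u" "0 \<notin> u" "card u = e" using u HS S_iff by blast+
    have u1: "\<And>j. j \<in> u \<Longrightarrow> 1 \<le> j"
    proof -
      fix j assume "j \<in> u" then have "j \<noteq> 0" using uS by metis
      then show "1 \<le> j" by simp
    qed
    show "v \<in> (image Suc) ` H \<union> up ` IncF (sec H)"
    proof (cases "1 \<in> v")
      case True
      then obtain j where j: "j \<in> u" "\<pi> j = 1" using v by auto
      have "j \<le> 1" using Inc1_ge[OF pi u1[OF j(1)]] j(2) by simp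
      then have j1: "j = 1" using u1[OF j(1)] by simp
      then have "u \<in> {w \<in> H. 1 \<in> w}" using j u by simp
      then obtain a where a: "a \<in> sec H" "u = up a" using up_sec[OF HS] by (metis imageE)
      have a0: "0 \<notin> a" using a by (simp add: sec_def)
      define \<rho> where "\<rho> = (\<lambda>j. \<pi> (Suc j) - 1)"
      have rho: "\<rho> \<in> Inc1" unfolding \<rho>_def using Inc1_drop pi j j1 by simp
      have ra: "\<rho> ` a \<in> IncF (sec H)" unfolding IncF_def using a rho by blast
      have "Suc ` \<rho> ` a = (\<lambda>j. \<pi> (Suc j)) ` a"
        unfolding image_image
      proof (rule image_cong[OF refl])
        fix x assume "x \<in> a"
        have "1 \<le> \<pi> (Suc x)" using Inc1_D[OF pi, of "Suc x"] by simp
        then show "Suc (\<rho> x) = \<pi> (Suc x)" unfolding \<rho>_def by simp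
      qed
      moreover have "v = insert 1 ((\<lambda>j. \<pi> (Suc j)) ` a)"
        using v a(2) j j1 by (auto simp: up_def image_image)
      ultimately have "v = up (\<rho> ` a)" by (simp add: up_def)
      then show ?thesis using ra by blast
    next
      case False
      define f where "f = (\<lambda>j. \<pi> j - 1)"
      define b where "b = f ` u"
      have sb: "Suc ` b = v"
        unfolding b_def v image_image
      proof (rule image_cong[OF refl])
        fix x assume "x \<in> u"
        have "1 \<le> \<pi> x" using Inc1_D[OF pi u1[OF \<open>x \<in> u\<close>]] by simp
        then show "Suc (f x) = \<pi> x" unfolding f_def by simp
      qed
      have inj: "inj_on f u"
      proof (rule inj_onI)
        fix x y assume xy: "x \<in> u" "y \<in> u" "f x = f y"
        have "1 \<le> \<pi> x" "1 \<le> \<pi> y" using Inc1_D[OF pi u1] xy by auto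
        then have "\<pi> x = \<pi> y" using xy(3) unfolding f_def by simp
        then show "x = y" using Inc1_mono[OF pi u1[OF xy(1)], of y] Inc1_mono[OF pi u1[OF xy(2)], of x]
          by (metis less_irrefl linorder_neqE_nat)
      qed
      have fle: "\<forall>j\<in>u. f j \<le> j" using Inc1_D[OF pi u1] unfolding f_def by fastforce
      have dl: "dle b u" unfolding b_def using dle_img[OF uS(1) inj fle] .
      have b0: "0 \<notin> b"
      proof
        assume "0 \<in> b"
        then obtain x where x: "x \<in> u" "0 = f x" unfolding b_def by (rule imageE)
        have "1 \<le> \<pi> x" using Inc1_D[OF pi u1[OF x(1)]] by simp
        then have "\<pi> x = 1" using x(2) unfolding f_def by simp
        then have "1 \<in> v" using v x(1) by (metis imageI)
        then show False using False by simp
      qed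
      have bS: "b \<in> subsets_N e" using b0 uS inj by (simp add: S_iff b_def card_image)
      have "b \<in> H" using sh u bS dl unfolding shifted_def by blast
      then show ?thesis using sb by blast
    qed
  qed
next
  show "(image Suc) ` H \<union> up ` IncF (sec H) \<subseteq> IncF H"
  proof
    fix v assume "v \<in> (image Suc) ` H \<union> up ` IncF (sec H)"
    then consider (A) u where "u \<in> H" "v = Suc ` u" | (B) w where "w \<in> IncF (sec H)" "v = up w" by blast
    then show "v \<in> IncF H"
    proof cases
      case A then show ?thesis unfolding IncF_def using Suc_Inc1 by blast
    next
      case B
      then obtain a \<pi> where a: "a \<in> sec H" and pi: "\<pi> \<in> Inc1" and w: "w = \<pi> ` a" unfolding IncF_def by blast
      have a0: "0 \<notin> a" "up a \<in> H" using a by (auto simp: sec_def)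
      define \<pi>' where "\<pi>' = (\<lambda>j. if j \<le> 1 then j else Suc (\<pi> (j - 1)))"
      have pi': "\<pi>' \<in> Inc1" unfolding \<pi>'_def using Inc1_lift[OF pi] .
      have p1: "\<pi>' 1 = 1" by (simp add: \<pi>'_def)
      have "\<pi>' ` (up a) = insert 1 ((\<lambda>j. \<pi>' (Suc j)) ` a)" unfolding up_def image_insert image_image p1 ..
      also have "(\<lambda>j. \<pi>' (Suc j)) ` a = Suc ` \<pi> ` a"
        unfolding image_image
      proof (rule image_cong[OF refl])
        fix x assume "x \<in> a"
        then have "x \<noteq> 0" using a0 by metis
        then show "\<pi>' (Suc x) = Suc (\<pi> x)" unfolding \<pi>'_def by simp
      qed
      finally have "\<pi>' ` (up a) = v" using B w by (simp add: up_def)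
      then show ?thesis unfolding IncF_def using a0 pi' by blast
    qed
  qed
qed

lemma card_IncF_rec: assumes sh: "shifted e H" and e1: "1 \<le> e" and fH: "finite H"
  shows "card (IncF H) = card H + card (IncF (sec H))"
proof -
  have HS: "H \<subseteq> subsets_N e" using sh unfolding shifted_def by blast
  have secS: "sec H \<subseteq> subsets_N (e - 1)" using sec_sub[OF HS] .
  have f2: "finite (IncF (sec H))"
    using finite_IncF[of "sec H"] finite_sec[OF fH] secS S_iff by (meson subsetD)
  have pos: "\<forall>w\<in>IncF (sec H). 0 \<notin> w"
  proof
    fix w assume "w \<in> IncF (sec H)"
    then obtain a \<pi> where a: "a \<in> sec H" and pi: "\<pi> \<in> Inc1" and w: "w = \<pi> ` a" unfolding IncF_def by blast
    have "\<forall>x\<in>a. x \<noteq> 0" using a unfolding sec_def by (metis (mono_tags, lifting) mem_Collect_eq)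
    then have "\<forall>x\<in>a. 1 \<le> \<pi> x" using Inc1_D[OF pi] by (metis less_one not_le)
    then show "0 \<notin> w" using w by auto
  qed
  have disj: "(image Suc) ` H \<inter> up ` IncF (sec H) = {}"
  proof -
    have "\<forall>u\<in>H. 1 \<notin> Suc ` u" using HS S_iff by auto
    moreover have "\<forall>w. 1 \<in> up w" by (simp add: up_def)
    ultimately show ?thesis by blast
  qed
  have c1: "card ((image Suc) ` H) = card H"
    by (intro card_image) (auto simp: inj_on_def inj_image_eq_iff)
  have c2: "card (up ` IncF (sec H)) = card (IncF (sec H))"
    by (intro card_image inj_onI) (use pos inj_up in blast)
  show ?thesis
    unfolding IncF_rec[OF sh e1] using card_Un_disjoint[OF _ _ disj] c1 c2 f2 fH by simp
qed

lemma finite_shd: assumes "finite F" "\<forall>w\<in>F. finite w" shows "finite (shd F)"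
proof -
  have "shd F = (\<lambda>(w, x). w - {x}) ` (Sigma F (\<lambda>w. w))" by (auto simp: shd_def)
  moreover have "finite (Sigma F (\<lambda>w. w))" using assms by (intro finite_SigmaI) auto
  ultimately show ?thesis by simp
qed

lemma shd_mono: "F \<subseteq> F' \<Longrightarrow> shd F \<subseteq> shd F'" unfolding shd_def by blast

lemma ins_dle: assumes fw: "finite w" and x: "x \<in> w" and yx: "y \<le> x" and yn: "y \<notin> w - {x}"
  shows "dle (insert y (w - {x})) w"
  unfolding dle_def cnt_def
proof
  fix t
  show "card (w \<inter> {..<t}) \<le> card (insert y (w - {x}) \<inter> {..<t})"
  proof (cases "x < t")
    case True
    have e1: "w \<inter> {..<t} = insert x ((w - {x}) \<inter> {..<t})" using True x by auto
    have e2: "insert y (w - {x}) \<inter> {..<t} = insert y ((w - {x}) \<inter> {..<t})" using True yx by auto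
    have "card (w \<inter> {..<t}) = Suc (card ((w - {x}) \<inter> {..<t}))" unfolding e1 using fw by (intro card_insert_disjoint) auto
    moreover have "card (insert y (w - {x}) \<inter> {..<t}) = Suc (card ((w - {x}) \<inter> {..<t}))"
      unfolding e2 using fw yn by (intro card_insert_disjoint) auto
    ultimately show ?thesis by simp
  next
    case False
    then have "w \<inter> {..<t} \<subseteq> insert y (w - {x}) \<inter> {..<t}" by auto
    then show ?thesis using fw by (intro card_mono) auto
  qed
qed

lemma shd_secB_sub: assumes sh: "shifted e H" and e1: "1 \<le> e" shows "shd (secB H) \<subseteq> sec H"
proof
  fix v assume "v \<in> shd (secB H)"
  then obtain b x where b: "b \<in> secB H" and x: "x \<in> b" and v: "v = b - {x}" unfolding shd_def by blast
  have b0: "0 \<notin> b" "Suc ` b \<in> H" using b by (auto simp: secB_def)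
  have HS: "H \<subseteq> subsets_N e" using sh unfolding shifted_def by blast
  have fb: "finite b" "card b = e" using b0(2) HS Suc_S by blast+
  have v0: "0 \<notin> v" using b0 v by auto
  have e: "up v = insert 1 (Suc ` b - {Suc x})" unfolding v up_def by (auto simp: inj_image_eq_iff)
  have "1 \<notin> Suc ` b - {Suc x}" using b0 by auto
  then have dl: "dle (up v) (Suc ` b)" unfolding e using fb x by (intro ins_dle) auto
  have "finite v" "card v = e - 1" using fb x v by auto
  then have "up v \<in> subsets_N e" using up_S[OF v0] e1 by simp
  then have "up v \<in> H" using sh b0 dl unfolding shifted_def by blast
  then show "v \<in> sec H" using v0 by (simp add: sec_def)
qed

lemma shd_rec: assumes sh: "shifted e B" and e1: "1 \<le> e"
  shows "shd B = (image Suc) ` sec B \<union> up ` shd (sec B)"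
proof
  have BS: "B \<subseteq> subsets_N e" using sh unfolding shifted_def by blast
  show "shd B \<subseteq> (image Suc) ` sec B \<union> up ` shd (sec B)"
  proof
    fix v assume "v \<in> shd B"
    then obtain w x where w: "w \<in> B" and x: "x \<in> w" and v: "v = w - {x}" unfolding shd_def by blast
    have wS: "finite w" "0 \<notin> w" "card w = e" using w BS S_iff by blast+
    show "v \<in> (image Suc) ` sec B \<union> up ` shd (sec B)"
    proof (cases "1 \<in> v")
      case False
      define a where "a = (\<lambda>y. y - 1) ` v"
      have ss: "Suc (y - 1) = y" if "y \<in> v" for y
      proof -
        have "y \<noteq> 0"
        proof assume "y = 0" then show False using that v wS by simp qed
        then show ?thesis by simp
      qed
      have "Suc ` a = (\<lambda>y. Suc (y - 1)) ` v" unfolding a_def image_image by simp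
      also have "\<dots> = (\<lambda>y. y) ` v" by (rule image_cong[OF refl ss])
      finally have sa: "Suc ` a = v" by simp
      have a0: "0 \<notin> a"
      proof
        assume "0 \<in> a"
        then obtain y where y: "y \<in> v" "0 = y - 1" unfolding a_def by (rule imageE)
        have "y \<noteq> 0" using y v wS by auto
        then have "y = 1" using y by arith
        then show False using y False by simp
      qed
      have x1: "1 \<le> x" using x wS by (cases x) auto
      have "insert 1 v \<in> B"
      proof (cases "1 \<in> w")
        case True
        then have "x = 1" using False v by auto
        then have "insert 1 v = w" using v True by auto
        then show ?thesis using w by simp
      next
        case False1: False
        have dl: "dle (insert 1 v) w" unfolding v using wS x x1 False1 by (intro ins_dle) auto
        have "card (insert 1 v) = e" unfolding v using card_move[OF wS(1) x False1] wS by simp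
        then have "insert 1 v \<in> subsets_N e" using wS v by (auto simp: S_iff)
        then show ?thesis using sh w dl unfolding shifted_def by blast
      qed
      then have "up a \<in> B" using sa by (simp add: up_def)
      then have "a \<in> sec B" using a0 by (simp add: sec_def)
      then show ?thesis using sa by blast
    next
      case True
      then have w1: "1 \<in> w" and x1: "x \<noteq> 1" using v by auto
      then have "w \<in> {w \<in> B. 1 \<in> w}" using w by simp
      then obtain a where a: "a \<in> sec B" "w = up a" using up_sec[OF BS] by (metis imageE)
      have a0: "0 \<notin> a" using a by (simp add: sec_def)
      have "x \<in> Suc ` a" using x x1 a(2) by (simp add: up_def)
      then obtain x' where x': "x' \<in> a" "x = Suc x'" by blast
      have "v = up (a - {x'})" using v a(2) x' a0 x1 by (auto simp: up_def)
      moreover have "a - {x'} \<in> shd (sec B)" using a x' unfolding shd_def by blast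
      ultimately show ?thesis by blast
    qed
  qed
next
  show "(image Suc) ` sec B \<union> up ` shd (sec B) \<subseteq> shd B"
  proof
    fix v assume "v \<in> (image Suc) ` sec B \<union> up ` shd (sec B)"
    then consider (A) a where "a \<in> sec B" "v = Suc ` a" | (C) a' where "a' \<in> shd (sec B)" "v = up a'" by blast
    then show "v \<in> shd B"
    proof cases
      case A
      have a0: "0 \<notin> a" "up a \<in> B" using A by (auto simp: sec_def)
      have "v = up a - {1}" using A a0 by (auto simp: up_def)
      moreover have "1 \<in> up a" by (simp add: up_def)
      ultimately show ?thesis using a0 unfolding shd_def by blast
    next
      case C
      then obtain a x' where a: "a \<in> sec B" and x': "x' \<in> a" and a': "a' = a - {x'}" unfolding shd_def by blast
      have a0: "0 \<notin> a" "up a \<in> B" using a by (auto simp: sec_def)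
      have "x' \<noteq> 0" using x' a0 by metis
      then have "v = up a - {Suc x'}" using C a' x' by (auto simp: up_def)
      moreover have "Suc x' \<in> up a" using x' by (simp add: up_def)
      ultimately show ?thesis using a0 unfolding shd_def by blast
    qed
  qed
qed

lemma card_shd_rec: assumes sh: "shifted e B" and e1: "1 \<le> e" and fB: "finite B"
  shows "card (shd B) = card (sec B) + card (shd (sec B))"
proof -
  have BS: "B \<subseteq> subsets_N e" using sh unfolding shifted_def by blast
  have secS: "sec B \<subseteq> subsets_N (e - 1)" using sec_sub[OF BS] .
  have fs: "finite (sec B)" using finite_sec[OF fB] .
  have f2: "finite (shd (sec B))" using finite_shd[OF fs] secS S_iff by (meson subsetD)
  have pos: "\<forall>w\<in>shd (sec B). 0 \<notin> w" unfolding shd_def sec_def by blast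
  have disj: "(image Suc) ` sec B \<inter> up ` shd (sec B) = {}"
  proof -
    have "\<forall>a\<in>sec B. 1 \<notin> Suc ` a" unfolding sec_def using one_notin_Suc by blast
    moreover have "\<forall>w. 1 \<in> up w" by (simp add: up_def)
    ultimately show ?thesis by blast
  qed
  have c1: "card ((image Suc) ` sec B) = card (sec B)"
    by (intro card_image) (auto simp: inj_on_def inj_image_eq_iff)
  have c2: "card (up ` shd (sec B)) = card (shd (sec B))"
    by (intro card_image inj_onI) (use pos inj_up in blast)
  show ?thesis
    unfolding shd_rec[OF sh e1] using card_Un_disjoint[OF _ _ disj] c1 c2 f2 fs by simp
qed

lemma key_cl:
  assumes fa: "finite a" and a0: "0 \<notin> a"
    and xd: "x = (LEAST x. 0 < x \<and> x \<notin> a)"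
    and fy: "finite y" and y0: "0 \<notin> y" and cy: "card y = card (insert x a)"
    and c: "cl y (insert x a)"
  shows "cl (Suc ` y) (up a)"
proof -
  define z where "z = insert x a"
  have ex: "\<exists>x. 0 < x \<and> x \<notin> a"
  proof -
    have "Suc (Max (insert 0 a)) \<notin> a" using fa by (metis Max_ge finite_insert insertCI Suc_n_not_le_n)
    then show ?thesis by blast
  qed
  have xa: "0 < x" "x \<notin> a" using LeastI_ex[OF ex] xd by auto
  have below: "\<And>t. 0 < t \<Longrightarrow> t < x \<Longrightarrow> t \<in> a" using not_less_Least xd by blast
  have fz: "finite z" "0 \<notin> z" using fa a0 xa by (auto simp: z_def)
  obtain s where s: "s \<in> z" "s \<notin> y" "\<forall>t>s. t \<in> y \<longleftrightarrow> t \<in> z" using c unfolding cl_def z_def by blast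
  have sx: "x < s"
  proof (rule ccontr)
    assume "\<not> x < s" then have sle: "s \<le> x" by simp
    have s0: "s \<noteq> 0" using s fz by metis
    have zs: "z \<inter> {..<Suc s} = {1..s}"
    proof (rule set_eqI)
      fix t show "t \<in> z \<inter> {..<Suc s} \<longleftrightarrow> t \<in> {1..s}"
      proof
        assume "t \<in> z \<inter> {..<Suc s}" then show "t \<in> {1..s}" using fz by (cases t) auto
      next
        assume t: "t \<in> {1..s}"
        then have "t = x \<or> (0 < t \<and> t < x)" using sle by auto
        then have "t \<in> z" using below by (auto simp: z_def)
        then show "t \<in> z \<inter> {..<Suc s}" using t by auto
      qed
    qed
    have ys: "y \<inter> {..<Suc s} \<subseteq> {1..<s}"
    proof
      fix t assume t: "t \<in> y \<inter> {..<Suc s}"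
      have "t \<noteq> 0" proof assume "t = 0" then show False using t y0 by simp qed
      moreover have "t \<noteq> s" using t s by auto
      ultimately show "t \<in> {1..<s}" using t by auto
    qed
    have c1: "cnt z (Suc s) = s" unfolding cnt_def zs by simp
    have c2: "cnt y (Suc s) \<le> s - 1" unfolding cnt_def using card_mono[OF _ ys] by simp
    have up_eq: "y \<inter> {Suc s..} = z \<inter> {Suc s..}" using s by auto
    have "card y = cnt y (Suc s) + card (z \<inter> {Suc s..})" using card_split[OF fy, of "Suc s"] up_eq by simp
    moreover have "card z = cnt z (Suc s) + card (z \<inter> {Suc s..})" using card_split[OF fz(1), of "Suc s"] by simp
    ultimately show False using c1 c2 cy s0 unfolding z_def by linarith
  qed
  have sa: "s \<in> a" using s sx by (auto simp: z_def)
  show ?thesis unfolding cl_def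
  proof (intro exI conjI allI impI)
    show "Suc s \<in> up a" using sa by (simp add: up_def)
    show "Suc s \<notin> Suc ` y" using s by auto
  next
    fix t assume t: "Suc s < t"
    then obtain t' where t': "t = Suc t'" "s < t'" by (cases t) auto
    have "t' \<in> y \<longleftrightarrow> t' \<in> z" using s t' by blast
    moreover have "t' \<in> z \<longleftrightarrow> t' \<in> a" using t' sx by (auto simp: z_def)
    moreover have "t \<in> up a \<longleftrightarrow> t' \<in> a" using t' t by (auto simp: up_def)
    ultimately show "t \<in> Suc ` y \<longleftrightarrow> t \<in> up a" using t' by auto
  qed
qed

lemma sec_sub_shd:
  assumes C: "compressed_in 0 e C" and e1: "1 \<le> e" and D: "compressed_in 0 e D"
    and cD: "card D = card (secB C) + 1"
  shows "sec C \<subseteq> shd D"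
proof
  fix a assume a: "a \<in> sec C"
  have c: "finite C" "C \<subseteq> subsets_N e" "\<forall>u\<in>C. \<forall>v\<in>subsets_N e. bin v < bin u \<longrightarrow> v \<in> C"
    using C comp_iff by auto
  have d: "finite D" "D \<subseteq> subsets_N e" "\<forall>u\<in>D. \<forall>v\<in>subsets_N e. bin v < bin u \<longrightarrow> v \<in> D"
    using D comp_iff by auto
  have a0: "0 \<notin> a" "up a \<in> C" using a by (auto simp: sec_def)
  have aS: "a \<in> subsets_N (e - 1)" using a sec_sub c(2) by blast
  have fa: "finite a" "card a = e - 1" using aS S_iff by auto
  define x where "x = (LEAST x. 0 < x \<and> x \<notin> a)"
  have ex: "\<exists>x. 0 < x \<and> x \<notin> a"
  proof -
    have "Suc (Max (insert 0 a)) \<notin> a" using fa by (metis Max_ge finite_insert insertCI Suc_n_not_le_n)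
    then show ?thesis by blast
  qed
  have xa: "0 < x" "x \<notin> a" using LeastI_ex[OF ex] x_def by auto
  define z where "z = insert x a"
  have cz: "card z = e" using fa xa e1 by (simp add: z_def)
  have zS: "z \<in> subsets_N e" using cz fa xa a0 by (auto simp: S_iff z_def)
  have "z \<in> D"
  proof (rule ccontr)
    assume zD: "z \<notin> D"
    have E: "compressed_in 0 e (secB C)" using secB_comp[OF C] .
    have "secB C \<subseteq> D" using comp_nested[OF E D] cD by simp
    moreover have fE: "finite (secB C)" using finite_secB c(1) by blast
    ultimately have "\<not> D \<subseteq> secB C" using cD card_mono[OF fE] by fastforce
    then obtain y where yD: "y \<in> D" and yE: "y \<notin> secB C" by blast
    have yS: "y \<in> subsets_N e" using yD d(2) by blast
    have fy: "finite y" "0 \<notin> y" "card y = e" using yS S_iff by auto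
    have fz: "finite z" using fa by (simp add: z_def)
    have "y \<noteq> z" using yD zD by blast
    then have "bin y \<noteq> bin z" using bin_inj fy fz by blast
    moreover have "\<not> bin z < bin y" using d(3) yD zS zD by blast
    ultimately have "bin y < bin z" by linarith
    then have "cl y z" using bin_less_iff fy fz by blast
    then have "cl (Suc ` y) (up a)"
      using key_cl[OF fa(1) a0(1) x_def fy(1) fy(2)] fy cz unfolding z_def by simp
    then have "bin (Suc ` y) < bin (up a)" using cl_bin fy fa by (simp add: up_def)
    moreover have "Suc ` y \<in> subsets_N e" using Suc_S fy by simp
    ultimately have "Suc ` y \<in> C" using c(3) a0 by blast
    then have "y \<in> secB C" using fy by (simp add: secB_def)
    then show False using yE by simp
  qed
  moreover have "a = z - {x}" using xa by (simp add: z_def)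
  moreover have "x \<in> z" by (simp add: z_def)
  ultimately show "a \<in> shd D" unfolding shd_def by blast
qed

lemma sec_S0: "C \<subseteq> subsets_N 0 \<Longrightarrow> sec C = {}"
proof -
  assume CS: "C \<subseteq> subsets_N 0"
  show "sec C = {}"
  proof (rule ccontr)
    assume "sec C \<noteq> {}"
    then obtain a where "0 \<notin> a" "up a \<in> C" unfolding sec_def by blast
    then show False using up_S[of a 0] CS by auto
  qed
qed

lemma shd_S0: "C \<subseteq> subsets_N 0 \<Longrightarrow> shd C = {}"
proof -
  assume CS: "C \<subseteq> subsets_N 0"
  have "\<forall>w\<in>C. w = {}"
  proof
    fix w assume "w \<in> C"
    then have "finite w" "card w = 0" using CS S_iff by blast+
    then show "w = {}" by simp
  qed
  then show "shd C = {}" unfolding shd_def by blast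
qed

lemma one_in_shifted:
  assumes sh: "shifted e H" and e1: "1 \<le> e" and u: "u \<in> H"
  shows "sec H \<noteq> {}"
proof -
  have HS: "H \<subseteq> subsets_N e" using sh unfolding shifted_def by blast
  have uS: "finite u" "0 \<notin> u" "card u = e" using u HS S_iff by blast+
  have "\<exists>v\<in>H. 1 \<in> v"
  proof (cases "1 \<in> u")
    case True then show ?thesis using u by blast
  next
    case False
    have "u \<noteq> {}" using uS e1 by auto
    then obtain k where k: "k \<in> u" by blast
    have k1: "1 \<le> k" using k uS by (cases k) auto
    have dl: "dle (insert 1 (u - {k})) u" using uS k k1 False by (intro ins_dle) auto
    have "card (insert 1 (u - {k})) = e" using card_move[OF uS(1) k False] uS by simp
    then have "insert 1 (u - {k}) \<in> subsets_N e" using uS by (auto simp: S_iff)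
    then have "insert 1 (u - {k}) \<in> H" using sh u dl unfolding shifted_def by blast
    then show ?thesis by blast
  qed
  then obtain v where "v \<in> {w \<in> H. 1 \<in> w}" by blast
  then have "v \<in> up ` sec H" using up_sec[OF HS] by simp
  then show ?thesis by blast
qed

lemma KK_K:
  "\<forall>m. (\<forall>H C. shifted e H \<and> finite H \<and> compressed_in 0 e C \<and> card H = m \<and> card C = m
          \<longrightarrow> card (sec C) \<le> card (sec H)) \<and>
       (\<forall>B C. shifted e B \<and> finite B \<and> compressed_in 0 e C \<and> card B = m \<and> card C = m
          \<longrightarrow> card (shd C) \<le> card (shd B))"
proof (induction e)
  case 0
  show ?case
  proof (intro allI conjI impI)
    fix m H C
    assume "shifted 0 H \<and> finite H \<and> compressed_in 0 0 C \<and> card H = m \<and> card C = m"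
    then have "C \<subseteq> subsets_N 0" unfolding compressed_in_def by blast
    then show "card (sec C) \<le> card (sec H)" using sec_S0 by simp
  next
    fix m B C
    assume "shifted 0 B \<and> finite B \<and> compressed_in 0 0 C \<and> card B = m \<and> card C = m"
    then have "C \<subseteq> subsets_N 0" unfolding compressed_in_def by blast
    then show "card (shd C) \<le> card (shd B)" using shd_S0 by simp
  qed
next
  case (Suc e')
  define e where "e = Suc e'"
  have e1: "1 \<le> e" and ee: "e - 1 = e'" by (simp_all add: e_def)
  have IHe: "\<And>m B C. shifted e' B \<Longrightarrow> finite B \<Longrightarrow> compressed_in 0 e' C \<Longrightarrow> card B = m \<Longrightarrow> card C = m
          \<Longrightarrow> card (shd C) \<le> card (shd B)" using Suc.IH by blast
  show ?case unfolding e_def[symmetric]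
  proof (rule allI)
    fix m
    show "(\<forall>H C. shifted e H \<and> finite H \<and> compressed_in 0 e C \<and> card H = m \<and> card C = m
          \<longrightarrow> card (sec C) \<le> card (sec H)) \<and>
       (\<forall>B C. shifted e B \<and> finite B \<and> compressed_in 0 e C \<and> card B = m \<and> card C = m
          \<longrightarrow> card (shd C) \<le> card (shd B))"
    proof (induction m rule: less_induct)
      case (less m)
      have Kpart: "card (sec C) \<le> card (sec H)"
        if H: "shifted e H" "finite H" and C: "compressed_in 0 e C" and cH: "card H = m" and cC: "card C = m"
        for H C
      proof (cases "m = 0")
        case True
        then have "C = {}" using cC C unfolding compressed_in_def by auto
        then show ?thesis by (simp add: sec_def)
      next
        case False
        have HS: "H \<subseteq> subsets_N e" using H unfolding shifted_def by blast
        have Csh: "shifted e C" using comp_shifted[OF C] .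
        have CS: "C \<subseteq> subsets_N e" and fC: "finite C" using C unfolding compressed_in_def by auto
        show ?thesis
        proof (rule ccontr)
          assume "\<not> ?thesis"
          then have ha: "card (sec H) < card (sec C)" by simp
          have "H \<noteq> {}" using cH False by auto
          then obtain u where "u \<in> H" by blast
          then have "sec H \<noteq> {}" using one_in_shifted[OF H(1) e1] by blast
          then have h1: "1 \<le> card (sec H)" using finite_sec[OF H(2)] by (simp add: Suc_le_eq card_gt_0_iff)
          have pH: "m = card (sec H) + card (secB H)" using card_partition[OF HS H(2)] cH by simp
          have pC: "m = card (sec C) + card (secB C)" using card_partition[OF CS fC] cC by simp
          define B where "B = secB H"
          have Bsh: "shifted e B" unfolding B_def using secB_shifted[OF H(1)] .
          have fB: "finite B" unfolding B_def using finite_secB[OF H(2)] .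
          have BS: "B \<subseteq> subsets_N e" using Bsh unfolding shifted_def by blast
          obtain CB where CB: "compressed_in 0 e CB" "card CB = card B" using comp_exists[OF fB BS] by blast
          have "card (secB C) + 1 \<le> card B" using ha pH pC unfolding B_def by linarith
          then obtain D where D: "compressed_in 0 e D" "card D = card (secB C) + 1"
            using comp_exists[OF fB BS, of "card (secB C) + 1"] by blast
          have lt: "card B < m" using pH h1 B_def by simp
          have i1: "card (shd CB) \<le> card (shd B)"
            using conjunct2[OF less.IH[OF lt], rule_format, of B CB] Bsh fB CB by simp
          have "card D \<le> card CB" using D(2) CB(2) ha pH pC unfolding B_def by linarith
          then have "D \<subseteq> CB" using comp_nested[OF D(1) CB(1)] by simp
          then have i2: "shd D \<subseteq> shd CB" by (rule shd_mono)
          have fCBs: "\<forall>w\<in>CB. finite w" using CB(1) unfolding compressed_in_def by (meson S_finite subsetD)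
          have fCB: "finite (shd CB)" using finite_shd[of CB] fCBs CB(1) unfolding compressed_in_def by blast
          have i3: "shd B \<subseteq> sec H" unfolding B_def using shd_secB_sub[OF H(1) e1] .
          have i4: "sec C \<subseteq> shd D" using sec_sub_shd[OF C e1 D] .
          have fsH: "finite (sec H)" using finite_sec[OF H(2)] .
          have "card (sec C) \<le> card (shd D)" using i4 i2 fCB by (intro card_mono) (auto intro: finite_subset)
          also have "\<dots> \<le> card (shd CB)" using i2 fCB by (intro card_mono)
          also have "\<dots> \<le> card (shd B)" using i1 .
          also have "\<dots> \<le> card (sec H)" using i3 fsH by (intro card_mono)
          finally have "card (sec C) \<le> card (sec H)" .
          then show False using ha by simp
        qed
      qed
      have KKpart: "card (shd C) \<le> card (shd B)"
        if B: "shifted e B" "finite B" and C: "compressed_in 0 e C" and cB: "card B = m" and cC: "card C = m"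
        for B C
      proof -
        have Csh: "shifted e C" using comp_shifted[OF C] .
        have fC: "finite C" using C unfolding compressed_in_def by auto
        have r1: "card (shd B) = card (sec B) + card (shd (sec B))" using card_shd_rec[OF B(1) e1 B(2)] .
        have r2: "card (shd C) = card (sec C) + card (shd (sec C))" using card_shd_rec[OF Csh e1 fC] .
        have k: "card (sec C) \<le> card (sec B)" using Kpart[OF B C cB cC] .
        have sB: "shifted e' (sec B)" using sec_shifted[OF B(1) e1] ee by simp
        have fsB: "finite (sec B)" using finite_sec[OF B(2)] .
        have sBS: "sec B \<subseteq> subsets_N e'" using sB unfolding shifted_def by blast
        obtain C' where C': "compressed_in 0 e' C'" "card C' = card (sec B)" using comp_exists[OF fsB sBS] by blast
        have i1: "card (shd C') \<le> card (shd (sec B))" using IHe[OF sB fsB C'(1) refl] C'(2) by simp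
        have sC: "compressed_in 0 e' (sec C)" using sec_comp[OF C e1] ee by simp
        have "sec C \<subseteq> C'" using comp_nested[OF sC C'(1)] k C'(2) by simp
        then have "shd (sec C) \<subseteq> shd C'" by (rule shd_mono)
        moreover have "finite (shd C')"
        proof -
          have "\<forall>w\<in>C'. finite w" using C'(1) unfolding compressed_in_def by (meson S_finite subsetD)
          then show ?thesis using finite_shd[of C'] C'(1) unfolding compressed_in_def by blast
        qed
        ultimately have "card (shd (sec C)) \<le> card (shd C')" by (rule card_mono[rotated])
        then show ?thesis using r1 r2 k i1 by linarith
      qed
      show ?case using Kpart KKpart by blast
    qed
  qed
qed

lemma Tmain:
  "\<forall>H C. shifted e H \<and> finite H \<and> compressed_in 0 e C \<and> card H = card C
     \<longrightarrow> card (IncF C) \<le> card (IncF H)"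
proof (induction e)
  case 0
  show ?case
  proof (intro allI impI)
    fix H C assume a: "shifted 0 H \<and> finite H \<and> compressed_in 0 0 C \<and> card H = card C"
    have HS: "H \<subseteq> {{}}" and CS: "C \<subseteq> {{}}"
    proof -
      have s0: "subsets_N 0 = {{}}" by (auto simp: S_iff)
      show "H \<subseteq> {{}}" using a s0 unfolding shifted_def by blast
      show "C \<subseteq> {{}}" using a s0 unfolding compressed_in_def by blast
    qed
    have "H = C"
    proof -
      have "H = {} \<or> H = {{}}" "C = {} \<or> C = {{}}" using HS CS by auto
      then show ?thesis using a by auto
    qed
    then show "card (IncF C) \<le> card (IncF H)" by simp
  qed
next
  case (Suc e')
  define e where "e = Suc e'"
  have e1: "1 \<le> e" and ee: "e - 1 = e'" by (simp_all add: e_def)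
  show ?case unfolding e_def[symmetric]
  proof (intro allI impI)
    fix H C assume a: "shifted e H \<and> finite H \<and> compressed_in 0 e C \<and> card H = card C"
    have H: "shifted e H" "finite H" and C: "compressed_in 0 e C" and cc: "card H = card C" using a by auto
    have Csh: "shifted e C" using comp_shifted[OF C] .
    have fC: "finite C" using C unfolding compressed_in_def by auto
    have r1: "card (IncF H) = card H + card (IncF (sec H))" using card_IncF_rec[OF H(1) e1 H(2)] .
    have r2: "card (IncF C) = card C + card (IncF (sec C))" using card_IncF_rec[OF Csh e1 fC] .
    have k: "card (sec C) \<le> card (sec H)"
      using conjunct1[OF KK_K[rule_format, of e "card H"], rule_format, of H C] H C cc by simp
    have sH: "shifted e' (sec H)" using sec_shifted[OF H(1) e1] ee by simp
    have fsH: "finite (sec H)" using finite_sec[OF H(2)] .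
    have sHS: "sec H \<subseteq> subsets_N e'" using sH unfolding shifted_def by blast
    obtain C' where C': "compressed_in 0 e' C'" "card C' = card (sec H)" using comp_exists[OF fsH sHS] by blast
    have i1: "card (IncF C') \<le> card (IncF (sec H))" using Suc.IH sH fsH C' by simp
    have sC: "compressed_in 0 e' (sec C)" using sec_comp[OF C e1] ee by simp
    have "sec C \<subseteq> C'" using comp_nested[OF sC C'(1)] k C'(2) by simp
    then have "IncF (sec C) \<subseteq> IncF C'" by (rule IncF_mono)
    moreover have "finite (IncF C')"
    proof (rule finite_IncF)
      show "finite C'" using C'(1) unfolding compressed_in_def by blast
      show "\<forall>u\<in>C'. finite u \<and> 0 \<notin> u" using C'(1) unfolding compressed_in_def using S_iff by blast
    qed
    ultimately have "card (IncF (sec C)) \<le> card (IncF C')" by (rule card_mono[rotated])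
    then show "card (IncF C) \<le> card (IncF H)" using r1 r2 i1 cc by linarith
  qed
qed

theorem mainTheorem10:
  fixes d :: nat and G H :: "nat set set"
  assumes "d \<ge> 2"
    and "G \<subseteq> subsets_N d" and "H \<subseteq> subsets_N d"
    and "finite G" and "finite H"
    and "card G = card H"
    and "compressed_in 0 d G"
    and "left_compressed d H" and "right_compressed d H"
  shows "card (IncF G) \<le> card (IncF H)"
proof -
  have "shifted d H" using LR_shifted[OF assms(1) assms(3) assms(8) assms(9)] .
  then show ?thesis using Tmain[rule_format, of d H G] assms by simp
qed

end
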